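(* For all integers $n,k,r$ with $0\le k\le n-2$ and $1\le r\le n$, $$\frac{k+1}{n-k-1}\sum_i\binom{k}{i}\binom{n-k+i-1}{r}\binom{n-i-1}{n-r}=\frac{k+1}{r}\sum_j(-1)^j\frac{\binom{k}{j}\binom{k-j}{j}\binom{n-j-2}{r-1}\binom{n-j-1}{r-j-1}}{\binom{n-j-2}{j}},$$ where the left sum is over integers $0\le i\le k$ and the right sum over integers $0\le j\le k/2$.
   Context: Binomial coefficients $\binom{a}{b}$ with $a\ge 0$ are $0$ if $b<0$ or $b>a$. *)

theory Defs
  imports Complex_Main
begin

text \<open>Binomial coefficient with integer arguments, following the paper's convention:
  for a \<ge> 0, binom a b = 0 if b < 0 or b > a. (For a < 0 it is set to 0; this
  case never arises in the statement.)\<close>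
definition ibinom :: "int \<Rightarrow> int \<Rightarrow> real" where
  "ibinom a b = (if a < 0 \<or> b < 0 \<or> b > a then 0 else real (nat a choose nat b))"

end

theory Submission
  imports Defs
begin
definition Pp :: "real \<Rightarrow> real \<Rightarrow> real \<Rightarrow> real \<Rightarrow> real" where
"Pp M b a s = (2*a+8*a^2+8*a^3+2*b+10*b*a+10*b*a^2-2*M-9*M*a-6*M*a^2+8*M*a^3-2*M*b+3*M*b*a+10*M*b*a^2+M^2-4*M^2*a-14*M^2*a^2-3*M^2*b-7*M^2*b*a+2*M^3+7*M^3*a+M^3*b-M^4)
 + (-5*a-14*a^2-8*a^3-5*b-16*b*a-10*b*a^2+5*M+16*M*a+8*M*a^2+3*M*b+M*b*a-2*M^2+M^2*a+M^2*b-M^3)*s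
 + (4*a+6*a^2+4*b+6*b*a-4*M-7*M*a-M*b+M^2)*s^2 + (-a-b+M)*s^3"

lemma poly_id:
  fixes a K M b :: real
  shows "- (M-2*a)*(M-2*a-1)*(M-a)*(2*a+2)*(2*a+1)*(M-K-1)*(M-2*a-1+K-(b-1))*(M-2*a+K-(b-1))
         - 2*(2*a+1)*(b-a)*(M-b-a)*(2*a-K)*(2*a+1-K)*(M-K-1)*(M-2*a+1+K)*(M-2*a+K)
   = (2*a+1-K)*(2*a+1)*(M-K-2-(b-1))*(M-2*a+K)*Pp M b a (K+2) + (K+1)*(2*a+1)*(M-K-1)*(M-2*a+K-(b-1))*Pp M b a (K+1)"
  unfolding Pp_def by algebra

lemma alg_step:
  fixes a K M b u v w cA cB cC xb x1b yb0 yb y2b :: real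
  assumes K: "K \<ge> 0" and a: "a \<ge> 0" and b: "b > 0" and y1: "M - 2*a + K > 0"
  and hA: "(K+1)*cA = (2*a+2)*u"
  and hB: "(K+1)*cB = (2*a+1-K)*u"
  and hC: "(2*a+1)*cC = (2*a-K)*cB"
  and hxb: "b*xb = (M-K-2 - (b-1))*v"
  and hx1b: "b*x1b = (M-K-1)*v"
  and hyb0: "(M-2*a+K)*yb0 = (M-2*a+K-(b-1))*w"
  and hyb: "b*yb = (M-2*a-1+K-(b-1))*yb0"
  and hy2b: "b*y2b = (M-2*a+1+K)*w"
  shows "(M-2*a)*(M-2*a-1)*(M-a)*(-(cA*x1b*yb)) + 2*(2*a+1)*(b-a)*(M-b-a)*(-(cC*x1b*y2b))
     = cB*xb*w*Pp M b a (K+2)/b + u*x1b*yb0*Pp M b a (K+1)/b"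
proof -
  define D where "D = (K+1)*(2*a+1)*b^2*(M-2*a+K)"
  have D0: "D \<noteq> 0" using K a b y1 unfolding D_def by auto
  have t1: "D*(cA*x1b*yb) = (2*a+1)*((K+1)*cA)*(b*x1b)*((M-2*a+K)*(b*yb))"
    unfolding D_def by (simp add: power2_eq_square mult_ac)
  have t1': "(M-2*a+K)*(b*yb) = (M-2*a-1+K-(b-1))*((M-2*a+K)*yb0)" using hyb by (simp add: mult_ac)
  have T1: "D*(cA*x1b*yb) = (2*a+1)*((2*a+2)*u)*((M-K-1)*v)*((M-2*a-1+K-(b-1))*((M-2*a+K-(b-1))*w))"
    using t1 t1' hA hx1b hyb0 by simp
  have t2: "D*(cC*x1b*y2b) = (K+1)*((2*a+1)*cC)*(b*x1b)*(b*y2b)*(M-2*a+K)"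
    unfolding D_def by (simp add: power2_eq_square mult_ac)
  have t2': "(K+1)*((2*a+1)*cC) = (2*a-K)*((K+1)*cB)" using hC by (simp add: mult_ac)
  have T2: "D*(cC*x1b*y2b) = (2*a-K)*((2*a+1-K)*u)*((M-K-1)*v)*((M-2*a+1+K)*w)*(M-2*a+K)"
    using t2 t2' hB hx1b hy2b by simp
  have t3: "D*(cB*xb*w*Pp M b a (K+2)/b) = (2*a+1)*((K+1)*cB)*(b*xb)*w*Pp M b a (K+2)*(M-2*a+K)"
    unfolding D_def using b by (simp add: power2_eq_square field_simps)
  have T3: "D*(cB*xb*w*Pp M b a (K+2)/b) = (2*a+1)*((2*a+1-K)*u)*((M-K-2 - (b-1))*v)*w*Pp M b a (K+2)*(M-2*a+K)"
    using t3 hB hxb by simp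
  have t4: "D*(u*x1b*yb0*Pp M b a (K+1)/b) = (K+1)*(2*a+1)*u*(b*x1b)*((M-2*a+K)*yb0)*Pp M b a (K+1)"
    unfolding D_def using b by (simp add: power2_eq_square field_simps)
  have T4: "D*(u*x1b*yb0*Pp M b a (K+1)/b) = (K+1)*(2*a+1)*u*((M-K-1)*v)*((M-2*a+K-(b-1))*w)*Pp M b a (K+1)"
    using t4 hx1b hyb0 by simp
  have "D*((M-2*a)*(M-2*a-1)*(M-a)*(-(cA*x1b*yb)) + 2*(2*a+1)*(b-a)*(M-b-a)*(-(cC*x1b*y2b)))
     = D*(cB*xb*w*Pp M b a (K+2)/b + u*x1b*yb0*Pp M b a (K+1)/b)"
  proof -
    have "D*((M-2*a)*(M-2*a-1)*(M-a)*(-(cA*x1b*yb)) + 2*(2*a+1)*(b-a)*(M-b-a)*(-(cC*x1b*y2b)))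
       = -(M-2*a)*(M-2*a-1)*(M-a)*(D*(cA*x1b*yb)) - 2*(2*a+1)*(b-a)*(M-b-a)*(D*(cC*x1b*y2b))"
      by algebra
    also have "\<dots> = u*v*w*(- (M-2*a)*(M-2*a-1)*(M-a)*(2*a+2)*(2*a+1)*(M-K-1)*(M-2*a-1+K-(b-1))*(M-2*a+K-(b-1))
         - 2*(2*a+1)*(b-a)*(M-b-a)*(2*a-K)*(2*a+1-K)*(M-K-1)*(M-2*a+1+K)*(M-2*a+K))"
      unfolding T1 T2 by algebra
    also have "\<dots> = u*v*w*((2*a+1-K)*(2*a+1)*(M-K-2-(b-1))*(M-2*a+K)*Pp M b a (K+2) + (K+1)*(2*a+1)*(M-K-1)*(M-2*a+K-(b-1))*Pp M b a (K+1))"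
      by (simp only: poly_id)
    also have "\<dots> = D*(cB*xb*w*Pp M b a (K+2)/b) + D*(u*x1b*yb0*Pp M b a (K+1)/b)"
      unfolding T3 T4 by algebra
    finally show ?thesis by algebra
  qed
  then show ?thesis using D0 by simp
qed

lemma gS: "of_nat (Suc k) * ((x::real) gchoose Suc k) = (x - of_nat k) * (x gchoose k)"
  using gbinomial_absorption[of k x] gbinomial_absorb_comp[of x k] by simp

definition dF :: "nat \<Rightarrow> nat \<Rightarrow> nat \<Rightarrow> nat \<Rightarrow> real" where
  "dF M b a s = (-1)^s * real (2*a choose s) * ((real M - real s) gchoose b)
      * ((real M - 2*real a + real s) gchoose b)"

definition dH :: "nat \<Rightarrow> nat \<Rightarrow> nat \<Rightarrow> nat \<Rightarrow> real" where
  "dH M b a s = -((-1)^s * real (2*a+1 choose s) * ((real M - real s - 1) gchoose b)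
      * ((real M - 2*real a - 1 + real s) gchoose (b-1)) * Pp (real M) (real b) (real a) (real s + 1) / real b)"

lemma dstep:
  assumes "2*a+2 \<le> M" "b \<ge> 1"
  shows "(real M-2*real a)*(real M-2*real a-1)*(real M-real a) * dF M b (Suc a) (Suc K)
     + 2*(2*real a+1)*(real b-real a)*(real M-real b-real a) * dF M b a (Suc K)
     = dH M b a (Suc K) - dH M b a K"
proof -
  obtain b0 where b0: "b = Suc b0" using assms(2) by (cases b) auto
  define x where "x = real M - real K - 2"
  define y where "y = real M - 2*real a - 1 + real K"
  define u where "u = real (2*a+1 choose K)"
  define cA where "cA = real (2*a+2 choose Suc K)"
  define cB where "cB = real (2*a+1 choose Suc K)"
  define cC where "cC = real (2*a choose Suc K)"
  define v where "v = x gchoose b0"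
  define xb where "xb = x gchoose b"
  define x1b where "x1b = (x+1) gchoose b"
  define w where "w = (y+1) gchoose b0"
  define yb0 where "yb0 = y gchoose b0"
  define yb where "yb = y gchoose b"
  define y2b where "y2b = (y+2) gchoose b"
  have hA: "(real K+1)*cA = (2*real a+2)*u"
  proof -
    have "real (Suc K * (Suc (2*a+1) choose Suc K)) = real (Suc (2*a+1) * (2*a+1 choose K))"
      using Suc_times_binomial[of K "2*a+1"] by (simp only:)
    then show ?thesis unfolding cA_def u_def by (simp add: algebra_simps)
  qed
  have hB: "(real K+1)*cB = (2*real a+1-real K)*u"
    using gS[of K "real (2*a+1)"] unfolding cB_def u_def binomial_gbinomial by (simp add: add.commute)
  have hC: "(2*real a+1)*cC = (2*real a-real K)*cB"
    using gbinomial_absorb_comp[of "real (2*a+1)" "Suc K"] unfolding cB_def cC_def binomial_gbinomial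
    by (simp add: algebra_simps)
  have hxb: "real b*xb = (real M-real K-2 - (real b-1))*v"
    using gS[of b0 x] unfolding xb_def v_def x_def b0 by simp
  have hx1b: "real b*x1b = (real M-real K-1)*v"
    using gbinomial_absorption[of b0 "x+1"] unfolding x1b_def v_def x_def b0 by (simp add: algebra_simps)
  have hyb0: "(real M-2*real a+real K)*yb0 = (real M-2*real a+real K-(real b-1))*w"
    using gbinomial_absorb_comp[of "y+1" b0] unfolding yb0_def w_def y_def b0 by (simp add: algebra_simps)
  have hyb: "real b*yb = (real M-2*real a-1+real K-(real b-1))*yb0"
    using gS[of b0 y] unfolding yb_def yb0_def y_def b0 by simp
  have hy2b: "real b*y2b = (real M-2*real a+1+real K)*w"
    using gbinomial_absorption[of b0 "y+2"] unfolding y2b_def w_def y_def b0 by (simp add: algebra_simps)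
  have y1: "real M - 2*real a + real K > 0" using assms(1) by linarith
  have Kp: "real K \<ge> 0" "real a \<ge> 0" "real b > 0" using assms by auto
  note main = alg_step[OF Kp y1 hA hB hC hxb hx1b hyb0 hyb hy2b]
  have eF1: "dF M b (Suc a) (Suc K) = -((-1)^K * (cA*x1b*yb))"
  proof -
    have e1: "real M - real (Suc K) = x + 1" unfolding x_def by simp
    have e2: "real M - 2*real (Suc a) + real (Suc K) = y" unfolding y_def by simp
    show ?thesis unfolding dF_def e1 e2 cA_def x1b_def yb_def by simp
  qed
  have eF0: "dF M b a (Suc K) = -((-1)^K * (cC*x1b*y2b))"
  proof -
    have e1: "real M - real (Suc K) = x + 1" unfolding x_def by simp
    have e2: "real M - 2*real a + real (Suc K) = y + 2" unfolding y_def by simp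
    show ?thesis unfolding dF_def e1 e2 cC_def x1b_def y2b_def by simp
  qed
  have eH1: "dH M b a (Suc K) = (-1)^K * (cB*xb*w*Pp (real M) (real b) (real a) (real K+2)/real b)"
  proof -
    have e1: "real M - real (Suc K) - 1 = x" unfolding x_def by simp
    have e2: "real M - 2*real a - 1 + real (Suc K) = y + 1" unfolding y_def by simp
    have e3: "real (Suc K) + 1 = real K + 2" by simp
    show ?thesis unfolding dH_def e1 e2 e3 cB_def xb_def w_def b0 by simp
  qed
  have eH0: "dH M b a K = -((-1)^K * (u*x1b*yb0*Pp (real M) (real b) (real a) (real K+1)/real b))"
  proof -
    have e1: "real M - real K - 1 = x + 1" unfolding x_def by simp
    show ?thesis unfolding dH_def e1 u_def x1b_def yb0_def y_def b0 by simp
  qed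
  have lin: "\<And>p q X Y Z W s::real. p*(-X) + q*(-Y) = Z + W \<Longrightarrow> p*(-(s*X)) + q*(-(s*Y)) = s*Z - (-(s*W))"
  proof -
    fix p q X Y Z W s :: real
    assume h: "p*(-X) + q*(-Y) = Z + W"
    have "s*(p*(-X) + q*(-Y)) = s*(Z + W)" using h by simp
    then show "p*(-(s*X)) + q*(-(s*Y)) = s*Z - (-(s*W))" by (simp add: algebra_simps)
  qed
  show ?thesis unfolding eF1 eF0 eH1 eH0
    by (rule lin[OF main])

qed


lemma dbase:
  assumes "2*a+2 \<le> M" "b \<ge> 1"
  shows "(real M-2*real a)*(real M-2*real a-1)*(real M-real a) * dF M b (Suc a) 0
     + 2*(2*real a+1)*(real b-real a)*(real M-real b-real a) * dF M b a 0
     = dH M b a 0"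
proof -
  obtain b0 where b0: "b = Suc b0" using assms(2) by (cases b) auto
  define x where "x = real M - 1"
  define y where "y = real M - 2*real a - 2"
  define v where "v = x gchoose b0"
  define xb where "xb = x gchoose b"
  define x1b where "x1b = (x+1) gchoose b"
  define w where "w = (y+1) gchoose b0"
  define yb0 where "yb0 = y gchoose b0"
  define yb where "yb = y gchoose b"
  define y2b where "y2b = (y+2) gchoose b"
  have hxb: "real b*xb = (x - real b0)*v"
    using gS[of b0 x] unfolding xb_def v_def b0 by simp
  have hx1b: "real b*x1b = (x+1)*v"
    using gbinomial_absorption[of b0 "x+1"] unfolding x1b_def v_def b0 by (simp add: algebra_simps)
  have hyb0: "(y+1)*yb0 = (y+1-real b0)*w"
    using gbinomial_absorb_comp[of "y+1" b0] unfolding yb0_def w_def by (simp add: algebra_simps)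
  have hyb: "real b*yb = (y - real b0)*yb0"
    using gS[of b0 y] unfolding yb_def yb0_def b0 by simp
  have hy2b: "real b*y2b = (y+2)*w"
    using gbinomial_absorption[of b0 "y+2"] unfolding y2b_def w_def b0 by (simp add: algebra_simps)
  have y1: "y + 1 > 0" unfolding y_def using assms(1) by linarith
  have bp: "real b > 0" using assms by simp
  define A where "A = (real M-2*real a)*(real M-2*real a-1)*(real M-real a)"
  define B where "B = 2*(2*real a+1)*(real b-real a)*(real M-real b-real a)"
  define P where "P = Pp (real M) (real b) (real a) 1"
  have eF1: "dF M b (Suc a) 0 = x1b*yb"
  proof -
    have e2: "real M - 2*real (Suc a) + 0 = y" unfolding y_def by simp
    show ?thesis unfolding dF_def x1b_def yb_def x_def using e2 by simp
  qed
  have eF0: "dF M b a 0 = x1b*y2b"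
  proof -
    have e2: "real M - 2*real a + 0 = y + 2" unfolding y_def by simp
    show ?thesis unfolding dF_def x1b_def y2b_def x_def using e2 by simp
  qed
  have eH: "dH M b a 0 = -(xb*w*P/real b)"
  proof -
    have e2: "real M - 2*real a - 1 + 0 = y + 1" unfolding y_def by simp
    show ?thesis unfolding dH_def xb_def w_def P_def x_def b0 using e2 by (simp add: add.commute)
  qed
  have pid: "- (real M-2*real a)*(real M-2*real a-1)*(real M-real a)*(2*real a+2)*(2*real a+1)*(real M-(-1)-1)*(real M-2*real a-1+(-1)-(real b-1))*(real M-2*real a+(-1)-(real b-1))
         - 2*(2*real a+1)*(real b-real a)*(real M-real b-real a)*(2*real a-(-1))*(2*real a+1-(-1))*(real M-(-1)-1)*(real M-2*real a+1+(-1))*(real M-2*real a+(-1))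
   = (2*real a+1-(-1))*(2*real a+1)*(real M-(-1)-2-(real b-1))*(real M-2*real a+(-1))*Pp (real M) (real b) (real a) ((-1)+2) + ((-1)+1)*(2*real a+1)*(real M-(-1)-1)*(real M-2*real a+(-1)-(real b-1))*Pp (real M) (real b) (real a) ((-1)+1)"
    by (rule poly_id)
  have pid2: "(2*real a+2)*(2*real a+1)*(A*(x+1)*(y-real b0)*(y+1-real b0) + B*(x+1)*(y+2)*(y+1) + (x - real b0)*(y+1)*P) = 0"
    using pid unfolding A_def B_def P_def x_def y_def b0 by (simp add: algebra_simps)
  have a0: "(2*real a+2)*(2*real a+1) \<noteq> 0" by simp
  have pid3: "A*(x+1)*(y-real b0)*(y+1-real b0) + B*(x+1)*(y+2)*(y+1) + (x - real b0)*(y+1)*P = 0"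
    using pid2 a0 by simp
  define D where "D = real b^2*(y+1)"
  have D0: "D \<noteq> 0" unfolding D_def using y1 bp by simp
  have T1: "D*(x1b*yb) = ((x+1)*v)*((y - real b0)*((y+1-real b0)*w))"
  proof -
    have "D*(x1b*yb) = (real b*x1b)*((real b*yb)*(y+1))" unfolding D_def by (simp add: power2_eq_square mult_ac)
    also have "\<dots> = ((x+1)*v)*((y - real b0)*((y+1)*yb0))" unfolding hx1b hyb by (simp add: mult_ac)
    finally show ?thesis unfolding hyb0 .
  qed
  have T2: "D*(x1b*y2b) = ((x+1)*v)*((y+2)*w)*(y+1)"
  proof -
    have "D*(x1b*y2b) = (real b*x1b)*(real b*y2b)*(y+1)" unfolding D_def by (simp add: power2_eq_square mult_ac)
    then show ?thesis unfolding hx1b hy2b .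
  qed
  have T3: "D*(xb*w*P/real b) = ((x - real b0)*v)*w*P*(y+1)"
  proof -
    have "D*(xb*w*P/real b) = (real b*xb)*w*P*(y+1)" unfolding D_def using bp by (simp add: power2_eq_square field_simps)
    then show ?thesis unfolding hxb .
  qed
  have "D*(A*(x1b*yb) + B*(x1b*y2b)) = D*(-(xb*w*P/real b))"
  proof -
    have "D*(A*(x1b*yb) + B*(x1b*y2b)) = A*(D*(x1b*yb)) + B*(D*(x1b*y2b))" by algebra
    also have "\<dots> = v*w*(A*(x+1)*(y-real b0)*(y+1-real b0) + B*(x+1)*(y+2)*(y+1))" unfolding T1 T2 by algebra
    also have "\<dots> = v*w*(-((x - real b0)*(y+1)*P))"
    proof -
      have e: "A*(x+1)*(y-real b0)*(y+1-real b0) + B*(x+1)*(y+2)*(y+1) = -((x - real b0)*(y+1)*P)"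
        using pid3 by linarith
      show ?thesis by (simp only: e)
    qed
    also have "\<dots> = -(D*(xb*w*P/real b))" unfolding T3 by algebra
    finally show ?thesis by simp
  qed
  then have "A*(x1b*yb) + B*(x1b*y2b) = -(xb*w*P/real b)" using mult_left_cancel[OF D0] by blast
  then show ?thesis unfolding eF1 eF0 eH A_def B_def .
qed

lemma tele:
  assumes "2*a+2 \<le> M" "b \<ge> 1"
  shows "(\<Sum>s\<le>K. (real M-2*real a)*(real M-2*real a-1)*(real M-real a) * dF M b (Suc a) s
     + 2*(2*real a+1)*(real b-real a)*(real M-real b-real a) * dF M b a s) = dH M b a K"
proof (induction K)
  case 0 then show ?case using dbase[OF assms] by simp
next
  case (Suc K) then show ?case using dstep[OF assms, of K] by simp
qed

definition dcf :: "nat \<Rightarrow> nat \<Rightarrow> nat \<Rightarrow> real" where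
  "dcf M b a = (if a \<le> b \<and> a + b \<le> M then (-1)^a * fact (2*a) * fact (M-2*a) * fact (M-a)
      / (fact a * fact (b-a) * fact (M-b-a) * fact b * fact (M-b)) else 0)"

lemma dcf_alg:
  fixes a p q s f2a fpq fapq fa fp fq fap faq :: real
  assumes "a \<ge> 0" "p \<ge> 0" "q \<ge> 0" "fa > 0" "fp > 0" "fq > 0" "fap > 0" "faq > 0"
  shows "(p+q+2)*(p+q+1)*(a+2+p+q) * (-s*((2*a+2)*(2*a+1)*f2a)*fpq*fapq / ((a+1)*fa*fp*fq*fap*faq))
    + 2*(2*a+1)*(p+1)*(q+1) * (s*f2a*((p+q+2)*(p+q+1)*fpq)*((a+2+p+q)*fapq) / (fa*((p+1)*fp)*((q+1)*fq)*fap*faq)) = 0"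
proof -
  define T where "T = 2*(2*a+1)*s*f2a*(p+q+2)*(p+q+1)*(a+2+p+q)*fpq*fapq / (fa*fp*fq*fap*faq)"
  have e1: "(2*a+2)/(a+1) = 2" using assms by (simp add: field_simps)
  have e2: "(p+1)/(p+1) = 1" "(q+1)/(q+1) = 1" using assms by auto
  have 1: "-s*((2*a+2)*(2*a+1)*f2a)*fpq*fapq / ((a+1)*fa*fp*fq*fap*faq) = -(2*(2*a+1)*s*f2a*fpq*fapq / (fa*fp*fq*fap*faq))"
  proof -
    have "-s*((2*a+2)*(2*a+1)*f2a)*fpq*fapq / ((a+1)*fa*fp*fq*fap*faq) = ((2*a+2)/(a+1)) * (-((2*a+1)*s*f2a*fpq*fapq / (fa*fp*fq*fap*faq)))"
      by (simp add: mult_ac)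
    then show ?thesis unfolding e1 by simp
  qed
  have 2: "s*f2a*((p+q+2)*(p+q+1)*fpq)*((a+2+p+q)*fapq) / (fa*((p+1)*fp)*((q+1)*fq)*fap*faq)
     = (s*f2a*((p+q+2)*(p+q+1)*fpq)*((a+2+p+q)*fapq) / (fa*fp*fq*fap*faq)) / ((p+1)*(q+1))"
    by (simp add: mult_ac)
  have pq: "(p+1)*(q+1) \<noteq> 0" using assms by auto
  show ?thesis unfolding 1 2 using pq by (simp add: mult_ac)
qed

lemma dcf_rec:
  assumes "2*a+2 \<le> M"
  shows "(real M-2*real a)*(real M-2*real a-1)*(real M-real a) * dcf M b (Suc a)
     + 2*(2*real a+1)*(real b-real a)*(real M-real b-real a) * dcf M b a = 0"
proof (cases "Suc a \<le> b \<and> Suc a + b \<le> M")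
  case True
  then obtain p q where pq: "b = Suc a + p" "M = Suc a + b + q"
    by (metis le_add_diff_inverse)
  have e1: "dcf M b (Suc a) = (-1)^(Suc a) * fact (2*a+2) * fact (p+q) * fact (a+1+p+q)
      / (fact (a+1) * fact p * fact q * fact (a+1+p) * fact (a+1+q))"
    unfolding dcf_def using True pq by (simp add: algebra_simps)
  have e0: "dcf M b a = (-1)^a * fact (2*a) * fact (p+q+2) * fact (a+2+p+q)
      / (fact a * fact (p+1) * fact (q+1) * fact (a+1+p) * fact (a+1+q))"
    unfolding dcf_def using True pq by (simp add: algebra_simps)
  have f1: "fact (2*a+2) = (2*real a+2)*(2*real a+1)*(fact (2*a)::real)"
  proof -
    have "2*a+2 = Suc (Suc (2*a))" by simp
    then show ?thesis by (simp only: fact_Suc) (simp add: algebra_simps)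
  qed
  have f2: "fact (p+q+2) = (real p+real q+2)*(real p+real q+1)*(fact (p+q)::real)"
  proof -
    have "p+q+2 = Suc (Suc (p+q))" by simp
    then show ?thesis by (simp only: fact_Suc) (simp add: algebra_simps)
  qed
  have f3: "fact (a+2+p+q) = (real a+2+real p+real q)*(fact (a+1+p+q)::real)"
  proof -
    have "a+2+p+q = Suc (a+1+p+q)" by simp
    then show ?thesis by (simp only: fact_Suc) (simp add: algebra_simps)
  qed
  have f4: "fact (a+1) = (real a+1)*(fact a::real)" by simp
  have f5: "fact (p+1) = (real p+1)*(fact p::real)" by simp
  have f6: "fact (q+1) = (real q+1)*(fact q::real)" by simp
  have hM: "(real M-2*real a)*(real M-2*real a-1)*(real M-real a) = (real p+real q+2)*(real p+real q+1)*(real a+2+real p+real q)"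
     "2*(2*real a+1)*(real b-real a)*(real M-real b-real a) = 2*(2*real a+1)*(real p+1)*(real q+1)" using pq by (auto simp: algebra_simps)
  have sg: "(-1::real)^(Suc a) = - ((-1)^a)" by simp
  show ?thesis unfolding e1 e0 f1 f2 f3 f4 f5 f6 hM sg
    using dcf_alg[of "real a" "real p" "real q" "fact a" "fact p" "fact q" "fact (a+1+p)" "fact (a+1+q)" "(-1)^a" "fact (2*a)" "fact (p+q)" "fact (a+1+p+q)"]
    by simp
next
  case False
  have z1: "dcf M b (Suc a) = 0" unfolding dcf_def using False by auto
  show ?thesis
  proof (cases "a \<le> b \<and> a + b \<le> M")
    case True
    with False have "b = a \<or> a + b = M" by auto
    then have "(real b-real a)*(real M-real b-real a) = 0" by auto
    then show ?thesis using z1 by simp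
  next
    case F2: False
    then have "dcf M b a = 0" unfolding dcf_def by auto
    then show ?thesis using z1 by simp
  qed
qed

definition dsum :: "nat \<Rightarrow> nat \<Rightarrow> nat \<Rightarrow> real" where
  "dsum M b a = (\<Sum>s\<le>2*a. dF M b a s)"

lemma dsum_rec:
  assumes "2*a+2 \<le> M" "b \<ge> 1"
  shows "(real M-2*real a)*(real M-2*real a-1)*(real M-real a) * dsum M b (Suc a)
     + 2*(2*real a+1)*(real b-real a)*(real M-real b-real a) * dsum M b a = 0"
proof -
  have c0: "real (2*a+1 choose (2*a+2)) = 0" using binomial_eq_0[of "2*a+1" "2*a+2"] by (simp del: binomial_Suc_Suc)
  have H0: "dH M b a (2*a+2) = 0" unfolding dH_def c0 by simp
  have s1: "dsum M b (Suc a) = (\<Sum>s\<le>2*a+2. dF M b (Suc a) s)" unfolding dsum_def by simp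
  have s0: "dsum M b a = (\<Sum>s\<le>2*a+2. dF M b a s)"
  proof -
    have "(\<Sum>s\<le>2*a+2. dF M b a s) = (\<Sum>s\<le>2*a. dF M b a s)"
    proof (rule sum.mono_neutral_right)
      show "\<forall>i\<in>{..2*a+2} - {..2*a}. dF M b a i = 0"
      proof
        fix i assume "i \<in> {..2*a+2} - {..2*a}"
        then have "2*a < i" by auto
        then have "(2*a choose i) = 0" by simp
        then show "dF M b a i = 0" unfolding dF_def by simp
      qed
    qed auto
    then show ?thesis unfolding dsum_def by simp
  qed
  define A where "A = (real M-2*real a)*(real M-2*real a-1)*(real M-real a)"
  define B where "B = 2*(2*real a+1)*(real b-real a)*(real M-real b-real a)"
  have T: "(\<Sum>s\<le>2*a+2. A * dF M b (Suc a) s + B * dF M b a s) = 0"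
    using tele[OF assms, of "2*a+2"] unfolding H0 A_def B_def .
  have eq: "(\<Sum>s\<le>2*a+2. A * dF M b (Suc a) s + B * dF M b a s) = A * (\<Sum>s\<le>2*a+2. dF M b (Suc a) s) + B * (\<Sum>s\<le>2*a+2. dF M b a s)"
    by (simp only: sum.distrib sum_distrib_left)
  have "A * dsum M b (Suc a) + B * dsum M b a = 0" unfolding s1 s0 using eq T by linarith
  then show ?thesis unfolding A_def B_def .
qed

lemma dixon:
  assumes "2*a \<le> M"
  shows "dsum M b a = dcf M b a"
proof (cases "b = 0")
  case True
  show ?thesis
  proof (cases "a = 0")
    case True
    then show ?thesis using \<open>b = 0\<close> unfolding dsum_def dcf_def dF_def by simp
  next
    case False
    have "dsum M b a = (\<Sum>s\<le>2*a. (-1)^s * real (2*a choose s))"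
      unfolding dsum_def dF_def using \<open>b = 0\<close> by simp
    also have "\<dots> = 0" using choose_alternating_sum[of "2*a"] False by simp
    finally show ?thesis using \<open>b = 0\<close> False unfolding dcf_def by simp
  qed
next
  case False
  then have b1: "b \<ge> 1" by simp
  show ?thesis using assms
  proof (induction a)
    case 0
    have "dsum M b 0 = (real M gchoose b) * (real M gchoose b)" unfolding dsum_def dF_def by simp
    also have "\<dots> = real (M choose b) * real (M choose b)" by (simp add: binomial_gbinomial)
    also have "\<dots> = dcf M b 0"
    proof (cases "b \<le> M")
      case True
      then show ?thesis unfolding dcf_def using binomial_fact[OF True, where 'a=real] by simp
    next
      case False
      then show ?thesis unfolding dcf_def by simp
    qed
    finally show ?case .
  next
    case (Suc a)
    have IH: "dsum M b a = dcf M b a" using Suc by simp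
    have a2: "2*a+2 \<le> M" using Suc.prems by simp
    have A0: "(real M-2*real a)*(real M-2*real a-1)*(real M-real a) \<noteq> 0" using a2 by auto
    define A where "A = (real M-2*real a)*(real M-2*real a-1)*(real M-real a)"
    define B where "B = 2*(2*real a+1)*(real b-real a)*(real M-real b-real a)"
    have "A * dsum M b (Suc a) = - (B * dsum M b a)" using dsum_rec[OF a2 b1] unfolding A_def B_def by linarith
    also have "\<dots> = - (B * dcf M b a)" using IH by simp
    also have "\<dots> = A * dcf M b (Suc a)" using dcf_rec[OF a2, of b] unfolding A_def B_def by linarith
    finally show ?case using A0 unfolding A_def by simp
  qed
qed

lemma refl_sum: "(\<Sum>s\<le>m. f (m - s)) = (\<Sum>s\<le>(m::nat). (f s :: real))"
  by (rule sum.reindex_bij_witness[where i="\<lambda>s. m - s" and j="\<lambda>s. m - s"]) auto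

lemma neg1_diff: "s \<le> m \<Longrightarrow> (-1::real)^(m - s) = (-1)^m * (-1)^s"
proof -
  assume "s \<le> m"
  then have "(-1::real)^(m - s) * (-1)^s = (-1)^m" by (simp add: power_add[symmetric])
  then show ?thesis by (metis mult.commute mult.right_neutral power2_eq_1_iff power_mult_distrib
      neg_one_even_power neg_one_odd_power mult_minus1_right minus_minus)
qed

definition ct :: "nat \<Rightarrow> nat \<Rightarrow> nat \<Rightarrow> real" where
  "ct n r t = (\<Sum>s\<le>t. (-1)^(t-s) * real (t choose s) * real ((n-1-s) choose r) * real ((n-1-t+s) choose (r-1)))"

lemma absorb_r: "real (Suc r0) * real (m choose Suc r0) = (real m - real r0) * real (m choose r0)"
  using gS[of r0 "real m"] by (simp add: binomial_gbinomial)

lemma ct_even: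
  assumes "2*j + 2 \<le> n" "r \<ge> 1"
  shows "real r * ct n r (2*j) = (real n - real j - real r) * dsum (n-1) (r-1) j"
proof -
  obtain r0 where r0: "r = Suc r0" using assms(2) by (cases r) auto
  define FD where "FD s = (-1)^s * real (2*j choose s) * real ((n-1-s) choose (r-1)) * real ((n-1-2*j+s) choose (r-1))" for s
  have e1: "real r * ct n r (2*j) = (\<Sum>s\<le>2*j. (real n - real s - real r) * FD s)"
    unfolding ct_def sum_distrib_left
  proof (rule sum.cong[OF refl])
    fix s assume s: "s \<in> {..2*j}"
    then have sl: "s \<le> 2*j" by simp
    have sg: "(-1::real)^(2*j-s) = (-1)^s" using neg1_diff[OF sl] by simp
    have a: "real r * real ((n-1-s) choose r) = (real n - real s - real r) * real ((n-1-s) choose (r-1))"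
    proof -
      have "real r * real ((n-1-s) choose r) = (real (n-1-s) - real r0) * real ((n-1-s) choose r0)"
        using absorb_r[of r0 "n-1-s"] unfolding r0 .
      also have "real (n-1-s) - real r0 = real n - real s - real r" using sl assms unfolding r0 by (simp add: of_nat_diff)
      finally show ?thesis unfolding r0 by simp
    qed
    have "real r * ((-1)^(2*j-s) * real (2*j choose s) * real ((n-1-s) choose r) * real ((n-1-2*j+s) choose (r-1)))
        = (-1)^s * real (2*j choose s) * (real r * real ((n-1-s) choose r)) * real ((n-1-2*j+s) choose (r-1))"
      unfolding sg by (simp only: mult_ac)
    also have "\<dots> = (real n - real s - real r) * FD s" unfolding a FD_def by (simp only: mult_ac)
    finally show "real r * ((-1)^(2*j-s) * real (2*j choose s) * real ((n-1-s) choose r) * real ((n-1-2*j+s) choose (r-1)))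
        = (real n - real s - real r) * FD s" .
  qed
  have sym: "FD (2*j - s) = FD s" if "s \<le> 2*j" for s
  proof -
    have sg: "(-1::real)^(2*j-s) = (-1)^s" using neg1_diff[OF that] by simp
    have c1: "(2*j choose (2*j - s)) = (2*j choose s)" using binomial_symmetric[OF that] by simp
    have i1: "n-1-(2*j-s) = n-1-2*j+s" "n-1-2*j+(2*j-s) = n-1-s" using that assms by auto
    show ?thesis unfolding FD_def sg c1 i1 by simp
  qed
  have z: "(\<Sum>s\<le>2*j. (real j - real s) * FD s) = 0"
  proof -
    have "(\<Sum>s\<le>2*j. (real j - real s) * FD s) = (\<Sum>s\<le>2*j. (real j - real (2*j - s)) * FD (2*j - s))"
      using refl_sum[of "\<lambda>s. (real j - real s) * FD s" "2*j"] by simp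
    also have "\<dots> = (\<Sum>s\<le>2*j. - ((real j - real s) * FD s))"
    proof (rule sum.cong[OF refl])
      fix s assume "s \<in> {..2*j}"
      then have sl: "s \<le> 2*j" by simp
      have f: "FD (2*j - s) = FD s" by (rule sym[OF sl])
      have g: "real (2*j - s) = 2*real j - real s" using sl by (simp add: of_nat_diff)
      show "(real j - real (2*j - s)) * FD (2*j - s) = - ((real j - real s) * FD s)"
        unfolding f g by (simp add: algebra_simps)
    qed
    finally show ?thesis by (simp add: sum_negf)
  qed
  have e2: "(\<Sum>s\<le>2*j. (real n - real s - real r) * FD s) = (real n - real j - real r) * (\<Sum>s\<le>2*j. FD s) + (\<Sum>s\<le>2*j. (real j - real s) * FD s)"
    by (simp add: sum_distrib_left sum.distrib[symmetric] algebra_simps)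
  have e3: "(\<Sum>s\<le>2*j. FD s) = dsum (n-1) (r-1) j"
    unfolding dsum_def
  proof (rule sum.cong[OF refl])
    fix s assume "s \<in> {..2*j}"
    then have sl: "s \<le> 2*j" by simp
    have g1: "real (n-1) - real s = real (n-1-s)" using sl assms by (simp add: of_nat_diff)
    have g2: "real (n-1) - 2*real j + real s = real (n-1-2*j+s)" using sl assms by (simp add: of_nat_diff)
    show "FD s = dF (n-1) (r-1) j s" unfolding FD_def dF_def g1 g2 binomial_gbinomial by simp
  qed
  show ?thesis using e1 e2 z e3 by simp
qed


lemma refl_gen:
  assumes "\<And>s. s \<le> m \<Longrightarrow> g (m - s) = h s"
  shows "(\<Sum>s\<le>(m::nat). (g s::real)) = (\<Sum>s\<le>m. h s)"
proof -
  have "(\<Sum>s\<le>m. g s) = (\<Sum>s\<le>m. g (m - s))" using refl_sum[of g m] by simp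
  also have "\<dots> = (\<Sum>s\<le>m. h s)" by (rule sum.cong) (auto simp: assms)
  finally show ?thesis .
qed

lemma pascal_sum:
  "(\<Sum>s\<le>Suc m. real (Suc m choose s) * f s) = (\<Sum>s\<le>m. real (m choose s) * (f s + f (Suc s)))"
proof -
  have A: "(\<Sum>s\<le>Suc m. real (Suc m choose s) * f s) = f 0 + (\<Sum>s\<le>m. real (Suc m choose Suc s) * f (Suc s))"
    by (simp only: sum.atMost_Suc_shift) simp
  have A2: "(\<Sum>s\<le>m. real (Suc m choose Suc s) * f (Suc s)) = (\<Sum>s\<le>m. real (m choose s) * f (Suc s)) + (\<Sum>s\<le>m. real (m choose Suc s) * f (Suc s))"
    by (simp add: sum.distrib algebra_simps)
  have B: "f 0 + (\<Sum>s\<le>m. real (m choose Suc s) * f (Suc s)) = (\<Sum>s\<le>Suc m. real (m choose s) * f s)"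
    by (simp only: sum.atMost_Suc_shift) simp
  have B2: "(\<Sum>s\<le>Suc m. real (m choose s) * f s) = (\<Sum>s\<le>m. real (m choose s) * f s)" by simp
  have C: "(\<Sum>s\<le>m. real (m choose s) * (f s + f (Suc s))) = (\<Sum>s\<le>m. real (m choose s) * f s) + (\<Sum>s\<le>m. real (m choose s) * f (Suc s))"
    by (simp add: sum.distrib algebra_simps)
  show ?thesis using A A2 B B2 C by linarith
qed

lemma ct_odd:
  assumes "2*j + 3 \<le> n" "r \<ge> 1"
  shows "2 * ct n r (2*j+1) = dsum n r (Suc j)"
proof -
  obtain r0 where r0: "r = Suc r0" using assms(2) by (cases r) auto
  define N where "N = n - 2*j - 2"
  define X where "X s = real ((n-s) choose r) * real ((N+s) choose r)" for s
  define T where "T = (\<Sum>s\<le>2*j+1. real (2*j+1 choose s) * ((-1)^s * X s))"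
  have d1: "dsum n r (Suc j) = (\<Sum>s\<le>Suc (2*j+1). real (Suc (2*j+1) choose s) * ((-1)^s * X s))"
    unfolding dsum_def
  proof (rule sum.cong)
    show "{..2 * Suc j} = {..Suc (2*j+1)}" by simp
  next
    fix s assume "s \<in> {..Suc (2*j+1)}"
    then have sl: "s \<le> 2*j+2" by simp
    have g1: "real n - real s = real (n-s)" using sl assms by (simp add: of_nat_diff)
    have g2: "real n - 2*real (Suc j) + real s = real (N+s)" unfolding N_def using sl assms by (simp add: of_nat_diff)
    show "dF n r (Suc j) s = real (Suc (2*j+1) choose s) * ((-1)^s * X s)"
      unfolding dF_def g1 g2 X_def binomial_gbinomial by simp
  qed
  have d2: "dsum n r (Suc j) = T - (\<Sum>s\<le>2*j+1. real (2*j+1 choose s) * ((-1)^s * X (Suc s)))"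
    unfolding d1 pascal_sum T_def sum_subtractf[symmetric]
    by (rule sum.cong[OF refl]) (simp add: algebra_simps)
  have d3: "(\<Sum>s\<le>2*j+1. real (2*j+1 choose s) * ((-1)^s * X (Suc s))) = - T"
  proof -
    have "(\<Sum>s\<le>2*j+1. real (2*j+1 choose s) * ((-1)^s * X (Suc s))) = (\<Sum>s\<le>2*j+1. - (real (2*j+1 choose s) * ((-1)^s * X s)))"
    proof (rule refl_gen)
      fix s assume sl: "s \<le> 2*j+1"
      have sg: "(-1::real)^(2*j+1-s) = - ((-1)^s)" using neg1_diff[OF sl] by simp
      have c1: "(2*j+1 choose (2*j+1 - s)) = (2*j+1 choose s)" using binomial_symmetric[OF sl] by simp
      have x: "X (Suc (2*j+1-s)) = X s"
      proof -
        have "n - Suc (2*j+1-s) = N + s" "N + Suc (2*j+1-s) = n - s" unfolding N_def using sl assms by auto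
        then show ?thesis unfolding X_def by simp
      qed
      show "real (2*j+1 choose (2*j+1-s)) * ((-1)^(2*j+1-s) * X (Suc (2*j+1-s))) = - (real (2*j+1 choose s) * ((-1)^s * X s))"
        unfolding sg c1 x by simp
    qed
    then show ?thesis unfolding T_def by (simp add: sum_negf)
  qed
  have dT: "dsum n r (Suc j) = 2 * T" using d2 d3 by simp
  define U1 where "U1 = (\<Sum>s\<le>2*j+1. (-1)^s * real (2*j+1 choose s) * real ((n-1-s) choose r) * real ((N+s) choose r))"
  define U2 where "U2 = (\<Sum>s\<le>2*j+1. (-1)^s * real (2*j+1 choose s) * real ((n-1-s) choose r0) * real ((N+s) choose r))"
  have TU: "T = U1 + U2"
    unfolding T_def U1_def U2_def sum.distrib[symmetric]
  proof (rule sum.cong[OF refl])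
    fix s assume "s \<in> {..2*j+1}"
    then have sl: "s \<le> 2*j+1" by simp
    have "n - s = Suc (n-1-s)" using sl assms by auto
    then have "((n-s) choose r) = ((n-1-s) choose r) + ((n-1-s) choose r0)" unfolding r0 by simp
    then show "real (2*j+1 choose s) * ((-1)^s * X s) = (-1)^s * real (2*j+1 choose s) * real ((n-1-s) choose r) * real ((N+s) choose r)
       + (-1)^s * real (2*j+1 choose s) * real ((n-1-s) choose r0) * real ((N+s) choose r)"
      unfolding X_def by (simp add: algebra_simps)
  qed
  have U1z: "U1 = 0"
  proof -
    have "U1 = (\<Sum>s\<le>2*j+1. - ((-1)^s * real (2*j+1 choose s) * real ((n-1-s) choose r) * real ((N+s) choose r)))"
      unfolding U1_def
    proof (rule refl_gen)
      fix s assume sl: "s \<le> 2*j+1"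
      have sg: "(-1::real)^(2*j+1-s) = - ((-1)^s)" using neg1_diff[OF sl] by simp
      have c1: "(2*j+1 choose (2*j+1 - s)) = (2*j+1 choose s)" using binomial_symmetric[OF sl] by simp
      have i: "n - 1 - (2*j+1-s) = N + s" "N + (2*j+1-s) = n - 1 - s" unfolding N_def using sl assms by auto
      show "(-1)^(2*j+1-s) * real (2*j+1 choose (2*j+1-s)) * real ((n-1-(2*j+1-s)) choose r) * real ((N+(2*j+1-s)) choose r)
          = - ((-1)^s * real (2*j+1 choose s) * real ((n-1-s) choose r) * real ((N+s) choose r))"
        unfolding sg c1 i by simp
    qed
    then show ?thesis unfolding U1_def by (simp add: sum_negf)
  qed
  have U2c: "U2 = ct n r (2*j+1)"
    unfolding U2_def ct_def
  proof (rule refl_gen)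
    fix s assume sl: "s \<le> 2*j+1"
    have sg: "(-1::real)^(2*j+1-s) = - ((-1)^s)" using neg1_diff[OF sl] by simp
    have c1: "(2*j+1 choose (2*j+1 - s)) = (2*j+1 choose s)" using binomial_symmetric[OF sl] by simp
    have i: "n - 1 - (2*j+1-s) = N + s" "N + (2*j+1-s) = n - 1 - s" "n - 1 - (2*j+1) + s = N + s" unfolding N_def using sl assms by auto
    have ss: "2*j+1 - (2*j+1-s) = s" using sl by simp
    show "(-1)^(2*j+1-s) * real (2*j+1 choose (2*j+1-s)) * real ((n-1-(2*j+1-s)) choose r0) * real ((N+(2*j+1-s)) choose r)
        = (-1)^(2*j+1-s) * real (2*j+1 choose s) * real ((n-1-s) choose r) * real ((n-1-(2*j+1)+s) choose (r-1))"
      unfolding sg c1 i r0 by simp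
  qed
  show ?thesis using dT TU U1z U2c by simp
qed

definition dj :: "nat \<Rightarrow> nat \<Rightarrow> nat \<Rightarrow> real" where
  "dj n r j = (-1)^j * real (2*j choose j) * real ((n-j-2) choose (r-1))
     * (if j+1 \<le> r then real ((n-j-1) choose (r-j-1)) else 0) / real ((n-j-2) choose j)"

lemma algE:
  fixes p q s F2j Fpq Fjpq1 Fj Fp Fq Fjp Fjq1 Fjpq :: real
  assumes "p \<ge> 0" "q \<ge> 0" "Fj > 0" "Fp > 0" "Fq > 0" "Fjp > 0" "Fjq1 > 0" "Fjpq > 0" "Fpq > 0"
  shows "(1+q) * (s*F2j*((1+p+q)*Fpq)*Fjpq1/(Fj*Fp*((1+q)*Fq)*Fjp*Fjq1))
     = (1+p+q) * (s*(F2j/(Fj*Fj))*(Fjpq/(Fjp*Fq))*(Fjpq1/(Fp*Fjq1))/(Fjpq/(Fj*Fpq)))"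
proof -
  have nz: "1+q \<noteq> 0" "Fj \<noteq> 0" "Fp \<noteq> 0" "Fq \<noteq> 0" "Fjp \<noteq> 0" "Fjq1 \<noteq> 0" "Fjpq \<noteq> 0" "Fpq \<noteq> 0"
    using assms by auto
  have "(1+q) * (s*F2j*((1+p+q)*Fpq)*Fjpq1/(Fj*Fp*((1+q)*Fq)*Fjp*Fjq1)) = ((1+q)/(1+q)) * ((1+p+q)*(s*F2j*Fpq*Fjpq1/(Fj*Fp*Fq*Fjp*Fjq1)))"
    by (simp add: mult_ac)
  also have "\<dots> = (1+p+q)*(s*F2j*Fpq*Fjpq1/(Fj*Fp*Fq*Fjp*Fjq1))" using nz by simp
  also have "\<dots> = (1+p+q) * (s*(F2j/(Fj*Fj))*(Fjpq/(Fjp*Fq))*(Fjpq1/(Fp*Fjq1))/(Fjpq/(Fj*Fpq)))"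
    using nz by (simp add: field_simps)
  finally show ?thesis .
qed

lemma algO:
  fixes j p q s F2j Fpq Fjpq1 Fj Fp Fq Fjp Fjq1 Fjpq :: real
  assumes "j \<ge> 0" "p \<ge> 0" "q \<ge> 0" "Fj > 0" "Fp > 0" "Fq > 0" "Fjp > 0" "Fjq1 > 0" "Fjpq > 0" "Fpq > 0"
  shows "(j+1+p) * ((-s)*((2*j+2)*(2*j+1)*F2j)*Fpq*Fjpq1/(((j+1)*Fj)*Fp*Fq*((j+1+p)*Fjp)*Fjq1)) / 2
     = -(2*j+1) * (s*(F2j/(Fj*Fj))*(Fjpq/(Fjp*Fq))*(Fjpq1/(Fp*Fjq1))/(Fjpq/(Fj*Fpq)))"
proof -
  have nz: "j+1 \<noteq> 0" "j+1+p \<noteq> 0" "Fj \<noteq> 0" "Fp \<noteq> 0" "Fq \<noteq> 0" "Fjp \<noteq> 0" "Fjq1 \<noteq> 0" "Fjpq \<noteq> 0" "Fpq \<noteq> 0"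
    using assms by auto
  have "(j+1+p) * ((-s)*((2*j+2)*(2*j+1)*F2j)*Fpq*Fjpq1/(((j+1)*Fj)*Fp*Fq*((j+1+p)*Fjp)*Fjq1)) / 2
     = ((j+1+p)/(j+1+p)) * (((2*j+2)/(2*(j+1))) * (-(2*j+1)*(s*F2j*Fpq*Fjpq1/(Fj*Fp*Fq*Fjp*Fjq1))))"
    using nz by (simp add: mult_ac) (simp add: field_simps)
  also have "(2*j+2)/(2*(j+1)) = 1" using nz by (simp add: field_simps)
  also have "(j+1+p)/(j+1+p) = 1" using nz by simp
  also have "1 * (1 * (-(2*j+1)*(s*F2j*Fpq*Fjpq1/(Fj*Fp*Fq*Fjp*Fjq1))))
     = -(2*j+1) * (s*(F2j/(Fj*Fj))*(Fjpq/(Fjp*Fq))*(Fjpq1/(Fp*Fjq1))/(Fjpq/(Fj*Fpq)))"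
    using nz by (simp add: field_simps)
  finally show ?thesis .
qed


lemma ce:
  assumes "2*j+2 \<le> n" "r \<ge> 1"
  shows "real r * ct n r (2*j) = (real n - 1 - 2*real j) * dj n r j"
proof -
  have h: "real r * ct n r (2*j) = (real n - real j - real r) * dcf (n-1) (r-1) j"
    using ct_even[OF assms] dixon[of j "n-1" "r-1"] assms by simp
  show ?thesis
  proof (cases "j+1 \<le> r \<and> j+r+1 \<le> n")
    case True
    then obtain p q where pq: "r = j+1+p" "n = j+r+1+q" by (metis add.commute le_add_diff_inverse le_iff_add)
    have cond: "j \<le> r-1 \<and> j + (r-1) \<le> n-1" using pq by simp
    have e1: "(fact (n-1-2*j)::real) = (1+real p+real q)*fact(p+q)"
    proof -
      have "n-1-2*j = Suc (p+q)" using pq by simp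
      then show ?thesis by (simp add: algebra_simps)
    qed
    have e2: "(fact (n-1-(r-1)-j)::real) = (1+real q)*fact q"
    proof -
      have "n-1-(r-1)-j = Suc q" using pq by simp
      then show ?thesis by (simp add: algebra_simps)
    qed
    have e3: "(fact (n-1-j)::real) = fact (j+1+p+q)" using pq by (simp add: algebra_simps)
    have e4: "(fact (r-1-j)::real) = fact p" using pq by simp
    have e5: "(fact (r-1)::real) = fact (j+p)" using pq by simp
    have e6: "(fact (n-1-(r-1))::real) = fact (j+1+q)" using pq by (simp add: algebra_simps)
    have dc: "dcf (n-1) (r-1) j = (-1)^j * fact(2*j) * ((1+real p+real q)*fact(p+q)) * fact(j+1+p+q)
        / (fact j * fact p * ((1+real q)*fact q) * fact(j+p) * fact(j+1+q))"
      unfolding dcf_def if_P[OF cond] e1 e2 e3 e4 e5 e6 by (rule refl)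
    have b1: "real (2*j choose j) = fact(2*j)/(fact j * fact j)"
      using binomial_fact[of j "2*j"] by simp
    have a2: "n-j-2 = j+p+q" "n-j-1 = j+1+p+q" "r-j-1 = p" "r-1 = j+p" using pq by auto
    have b2: "real ((n-j-2) choose (r-1)) = fact(j+p+q)/(fact(j+p)*fact q)"
      unfolding a2 using binomial_fact[of "j+p" "j+p+q"] by simp
    have b3: "real ((n-j-1) choose (r-j-1)) = fact(j+1+p+q)/(fact p*fact(j+1+q))"
      unfolding a2 using binomial_fact[of "p" "j+1+p+q"] by simp
    have b4: "real ((n-j-2) choose j) = fact(j+p+q)/(fact j*fact(p+q))"
      unfolding a2 using binomial_fact[of "j" "j+p+q"] by simp
    have djv: "dj n r j = (-1)^j * (fact(2*j)/(fact j * fact j)) * (fact(j+p+q)/(fact(j+p)*fact q))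
       * (fact(j+1+p+q)/(fact p*fact(j+1+q))) / (fact(j+p+q)/(fact j*fact(p+q)))"
      unfolding dj_def b1 b2 b3 b4 using True by simp
    have c1: "real n - real j - real r = 1 + real q" "real n - 1 - 2*real j = 1 + real p + real q" using pq by auto
    show ?thesis unfolding h dc djv c1
      using algE[of "real p" "real q" "fact j" "fact p" "fact q" "fact (j+p)" "fact (j+1+q)" "fact (j+p+q)" "fact (p+q)" "(-1)^j" "fact (2*j)" "fact (j+1+p+q)"]
      by simp
  next
    case False
    have z1: "dj n r j = 0"
    proof (cases "j+1 \<le> r")
      case True
      with False assms have "n - j - 2 < r - 1" by auto
      then show ?thesis unfolding dj_def by simp
    next
      case False
      then show ?thesis unfolding dj_def by simp
    qed
    have z2: "(real n - real j - real r) * dcf (n-1) (r-1) j = 0"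
    proof (cases "j \<le> r-1 \<and> j + (r-1) \<le> n-1")
      case True
      with False assms have "j + r = n" by auto
      then show ?thesis by simp
    next
      case F2: False
      then have "dcf (n-1) (r-1) j = 0" unfolding dcf_def by (simp only: if_False)
      then show ?thesis by simp
    qed
    show ?thesis unfolding h z1 z2 by simp
  qed
qed

lemma co:
  assumes "2*j+3 \<le> n" "r \<ge> 1"
  shows "real r * ct n r (2*j+1) = -(2*real j+1) * dj n r j"
proof -
  have h: "real r * ct n r (2*j+1) = real r * dcf n r (Suc j) / 2"
    using ct_odd[OF assms] dixon[of "Suc j" n r] assms by simp
  show ?thesis
  proof (cases "j+1 \<le> r \<and> j+r+1 \<le> n")
    case True
    then obtain p q where pq: "r = j+1+p" "n = j+r+1+q" by (metis add.commute le_add_diff_inverse le_iff_add)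
    have cond: "Suc j \<le> r \<and> Suc j + r \<le> n" using pq by simp
    have f1: "(fact (2*Suc j)::real) = (2*real j+2)*(2*real j+1)*fact(2*j)"
    proof -
      have "2*Suc j = Suc (Suc (2*j))" by simp
      then show ?thesis by (simp only: fact_Suc) (simp add: algebra_simps)
    qed
    have f2: "(fact (Suc j)::real) = (real j+1)*fact j" by simp
    have f3: "(fact r::real) = (real j+1+real p)*fact (j+p)"
    proof -
      have "r = Suc (j+p)" using pq by simp
      then show ?thesis by (simp only: fact_Suc) (simp add: algebra_simps)
    qed
    have f4: "(fact (n - 2*Suc j)::real) = fact (p+q)" using pq by simp
    have f5: "(fact (n - Suc j)::real) = fact (j+1+p+q)" using pq by (simp add: algebra_simps)
    have f6: "(fact (r - Suc j)::real) = fact p" using pq by simp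
    have f7: "(fact (n - r - Suc j)::real) = fact q" using pq by simp
    have f8: "(fact (n - r)::real) = fact (j+1+q)" using pq by (simp add: algebra_simps)
    have sg: "(-1::real)^(Suc j) = - ((-1)^j)" by simp
    have dc: "dcf n r (Suc j) = (- ((-1)^j)) * ((2*real j+2)*(2*real j+1)*fact(2*j)) * fact(p+q) * fact(j+1+p+q)
        / (((real j+1)*fact j) * fact p * fact q * ((real j+1+real p)*fact (j+p)) * fact(j+1+q))"
      unfolding dcf_def if_P[OF cond] f1 f2 f3 f4 f5 f6 f7 f8 sg by (rule refl)
    have b1: "real (2*j choose j) = fact(2*j)/(fact j * fact j)"
      using binomial_fact[of j "2*j"] by simp
    have a2: "n-j-2 = j+p+q" "n-j-1 = j+1+p+q" "r-j-1 = p" "r-1 = j+p" using pq by auto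
    have b2: "real ((n-j-2) choose (r-1)) = fact(j+p+q)/(fact(j+p)*fact q)"
      unfolding a2 using binomial_fact[of "j+p" "j+p+q"] by simp
    have b3: "real ((n-j-1) choose (r-j-1)) = fact(j+1+p+q)/(fact p*fact(j+1+q))"
      unfolding a2 using binomial_fact[of "p" "j+1+p+q"] by simp
    have b4: "real ((n-j-2) choose j) = fact(j+p+q)/(fact j*fact(p+q))"
      unfolding a2 using binomial_fact[of "j" "j+p+q"] by simp
    have djv: "dj n r j = (-1)^j * (fact(2*j)/(fact j * fact j)) * (fact(j+p+q)/(fact(j+p)*fact q))
       * (fact(j+1+p+q)/(fact p*fact(j+1+q))) / (fact(j+p+q)/(fact j*fact(p+q)))"
      unfolding dj_def b1 b2 b3 b4 using True by simp
    have c1: "real r = real j + 1 + real p" using pq by auto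
    have fin: "real r * dcf n r (Suc j) / 2 = -(2*real j+1) * dj n r j"
      unfolding dc djv c1
      using algO[of "real j" "real p" "real q" "fact j" "fact p" "fact q" "fact (j+p)" "fact (j+1+q)" "fact (j+p+q)" "fact (p+q)" "(-1)^j" "fact (2*j)" "fact (j+1+p+q)"]
      by simp
    show ?thesis using h fin by simp
  next
    case False
    have z1: "dj n r j = 0"
    proof (cases "j+1 \<le> r")
      case True
      with False assms have "n - j - 2 < r - 1" by auto
      then show ?thesis unfolding dj_def by simp
    next
      case False
      then show ?thesis unfolding dj_def by simp
    qed
    have z2: "dcf n r (Suc j) = 0" unfolding dcf_def using False by auto
    show ?thesis unfolding h z1 z2 by simp
  qed
qed

lemma altsum:
  assumes "K \<le> L"
  shows "(\<Sum>u\<le>K. (-1)^u * real (K choose u) * real ((L-u) choose q))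
       = (if K \<le> q then real ((L-K) choose (q-K)) else 0)"
  using assms
proof (induction K arbitrary: L)
  case 0 then show ?case by simp
next
  case (Suc K)
  define f where "f u = (-1)^u * real ((L-u) choose q)" for u
  have "(\<Sum>u\<le>Suc K. (-1)^u * real (Suc K choose u) * real ((L-u) choose q))
      = (\<Sum>u\<le>Suc K. real (Suc K choose u) * f u)"
    unfolding f_def by (simp add: mult_ac)
  also have "\<dots> = (\<Sum>u\<le>K. real (K choose u) * (f u + f (Suc u)))" by (rule pascal_sum)
  also have "\<dots> = (\<Sum>u\<le>K. (-1)^u * real (K choose u) * real ((L-u) choose q))
      - (\<Sum>u\<le>K. (-1)^u * real (K choose u) * real ((L-1-u) choose q))"
    unfolding sum_subtractf[symmetric] f_def
    by (rule sum.cong[OF refl]) (simp add: algebra_simps)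
  also have "\<dots> = (if K \<le> q then real ((L-K) choose (q-K)) else 0) - (if K \<le> q then real ((L-1-K) choose (q-K)) else 0)"
    using Suc.IH[of L] Suc.IH[of "L-1"] Suc.prems by simp
  also have "\<dots> = (if Suc K \<le> q then real ((L - Suc K) choose (q - Suc K)) else 0)"
  proof (cases "K \<le> q")
    case True
    have LK: "L - K = Suc (L - Suc K)" using Suc.prems by simp
    show ?thesis
    proof (cases "K = q")
      case True then show ?thesis by simp
    next
      case False
      with \<open>K \<le> q\<close> have qK: "q - K = Suc (q - Suc K)" by simp
      have "L - 1 - K = L - Suc K" by simp
      then show ?thesis unfolding LK qK using False \<open>K \<le> q\<close> by simp
    qed
  next
    case False then show ?thesis by simp
  qed
  finally show ?case .
qed

lemma expand:
  assumes "k + 2 \<le> n" "1 \<le> r" "r \<le> n"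
  shows "(\<Sum>i\<le>k. real (k choose i) * real ((n-1-k+i) choose r) * real ((n-1-i) choose (n-r)))
       = (\<Sum>t\<le>k. real (k choose t) * ct n r t)"
proof -
  define g where "g s u = real (k choose (s+u)) * (-1)^u * real ((s+u) choose s) * real ((n-1-s) choose r) * real ((n-1-u) choose (r-1))" for s u
  have "(\<Sum>t\<le>k. real (k choose t) * ct n r t) = (\<Sum>t\<le>k. \<Sum>s\<le>t. g s (t - s))"
    unfolding ct_def sum_distrib_left
  proof (rule sum.cong[OF refl], rule sum.cong[OF refl])
    fix t s assume t: "t \<in> {..k}" and s: "s \<in> {..t}"
    then have "s + (t - s) = t" "n-1-t+s = n-1-(t-s)" using assms by auto
    then show "real (k choose t) * ((-1)^(t-s) * real (t choose s) * real ((n-1-s) choose r) * real ((n-1-t+s) choose (r-1))) = g s (t - s)"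
      unfolding g_def by (simp add: mult_ac)
  qed
  also have "\<dots> = (\<Sum>(s,u)\<in>{(s,u). s+u \<le> k}. g s u)"
    by (rule sum.triangle_reindex_eq[symmetric])
  also have "\<dots> = (\<Sum>s\<le>k. \<Sum>u\<le>k-s. g s u)"
    by (simp add: pairs_le_eq_Sigma sum.Sigma)
  also have "\<dots> = (\<Sum>s\<le>k. real (k choose s) * real ((n-1-s) choose r) * (if k - s \<le> r - 1 then real ((n-1-(k-s)) choose (r-1-(k-s))) else 0))"
  proof (rule sum.cong[OF refl])
    fix s assume "s \<in> {..k}"
    then have sk: "s \<le> k" by simp
    have "(\<Sum>u\<le>k-s. g s u) = (\<Sum>u\<le>k-s. real (k choose s) * real ((n-1-s) choose r) * ((-1)^u * real ((k-s) choose u) * real ((n-1-u) choose (r-1))))"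
    proof (rule sum.cong[OF refl])
      fix u assume "u \<in> {..k-s}"
      then have "s + u \<le> k" using sk by simp
      then have "(k choose (s+u)) * ((s+u) choose s) = (k choose s) * ((k-s) choose u)"
        using choose_mult[of s "s+u" k] by simp
      then have "real (k choose (s+u)) * real ((s+u) choose s) = real (k choose s) * real ((k-s) choose u)"
        by (metis of_nat_mult)
      then show "g s u = real (k choose s) * real ((n-1-s) choose r) * ((-1)^u * real ((k-s) choose u) * real ((n-1-u) choose (r-1)))"
        unfolding g_def by (simp add: algebra_simps)
    qed
    also have "\<dots> = real (k choose s) * real ((n-1-s) choose r) * (\<Sum>u\<le>k-s. (-1)^u * real ((k-s) choose u) * real ((n-1-u) choose (r-1)))"
      by (simp add: sum_distrib_left)
    also have "(\<Sum>u\<le>k-s. (-1)^u * real ((k-s) choose u) * real ((n-1-u) choose (r-1))) = (if k - s \<le> r - 1 then real ((n-1-(k-s)) choose (r-1-(k-s))) else 0)"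
      by (rule altsum) (use assms sk in simp)
    finally show "(\<Sum>u\<le>k-s. g s u) = real (k choose s) * real ((n-1-s) choose r) * (if k - s \<le> r - 1 then real ((n-1-(k-s)) choose (r-1-(k-s))) else 0)" .
  qed
  also have "\<dots> = (\<Sum>i\<le>k. real (k choose i) * real ((n-1-k+i) choose r) * real ((n-1-i) choose (n-r)))"
  proof (rule refl_gen[symmetric])
    fix s assume sk: "s \<le> k"
    have c1: "(k choose (k - s)) = (k choose s)" using binomial_symmetric[OF sk] by simp
    have i1: "n-1-k+(k-s) = n-1-s" "n-1-(k-s) = n-1-k+s" using sk assms by auto
    have c2: "real ((n-1-k+s) choose (n-r)) = (if k - s \<le> r - 1 then real ((n-1-(k-s)) choose (r-1-(k-s))) else 0)"
    proof (cases "k - s \<le> r - 1")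
      case True
      then have le: "n - r \<le> n-1-k+s" using assms sk by auto
      have "(n-1-k+s) - (n-r) = r-1-(k-s)" using True assms sk by auto
      then show ?thesis using True binomial_symmetric[OF le] i1 by simp
    next
      case False
      then have "n - r > n-1-k+s" using assms sk by auto
      then show ?thesis using False by simp
    qed
    show "real (k choose (k-s)) * real ((n-1-k+(k-s)) choose r) * real ((n-1-(k-s)) choose (n-r))
        = real (k choose s) * real ((n-1-s) choose r) * (if k - s \<le> r - 1 then real ((n-1-(k-s)) choose (r-1-(k-s))) else 0)"
      unfolding c1 i1 c2 by simp
  qed
  finally show ?thesis by simp
qed


lemma core:
  assumes "K + 2 \<le> N" "1 \<le> R" "R \<le> N"
  shows "real R * (\<Sum>t\<le>K. real (K choose t) * ct N R t)
       = (real N - 1 - real K) * (\<Sum>j\<le>K div 2. real (K choose (2*j)) * dj N R j)"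
proof -
  define h where "h t = real (K choose t) * ct N R t" for t
  define m where "m = K div 2"
  have s1: "(\<Sum>t\<le>K. h t) = (\<Sum>t\<le>Suc (2*m). h t)"
  proof (cases "even K")
    case True
    then have "Suc (2*m) = Suc K" unfolding m_def by simp
    then show ?thesis unfolding h_def by simp
  next
    case False
    then have "Suc (2*m) = K" unfolding m_def by presburger
    then show ?thesis by simp
  qed
  have s2: "(\<Sum>t\<le>Suc (2*m). h t) = (\<Sum>j\<le>m. h (2*j) + h (Suc (2*j)))"
    by (rule sum.in_pairs_0)
  have pair: "real R * (h (2*j) + h (Suc (2*j))) = (real N - 1 - real K) * (real (K choose (2*j)) * dj N R j)"
    if j: "j \<le> m" for j
  proof -
    have jK: "2*j \<le> K" using j unfolding m_def by simp
    have e: "real R * h (2*j) = real (K choose (2*j)) * ((real N - 1 - 2*real j) * dj N R j)"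
      unfolding h_def using ce[of j N R] jK assms by (simp add: mult_ac)
    have ab: "real (Suc (2*j)) * real (K choose Suc (2*j)) = (real K - real (2*j)) * real (K choose (2*j))"
      by (rule absorb_r)
    have o: "real R * h (Suc (2*j)) = - (real K - 2*real j) * real (K choose (2*j)) * dj N R j"
    proof (cases "Suc (2*j) \<le> K")
      case True
      have "real R * h (Suc (2*j)) = real (K choose Suc (2*j)) * (real R * ct N R (2*j+1))"
        unfolding h_def by simp
      also have "\<dots> = real (K choose Suc (2*j)) * (-(2*real j+1) * dj N R j)"
        using co[of j N R] True assms by simp
      also have "\<dots> = - (real (Suc (2*j)) * real (K choose Suc (2*j))) * dj N R j"
        by (simp add: algebra_simps)
      finally show ?thesis unfolding ab by (simp add: algebra_simps)
    next
      case False
      then have "K = 2*j" using jK by simp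
      then show ?thesis unfolding h_def by simp
    qed
    show ?thesis unfolding distrib_left e o by (simp add: algebra_simps)
  qed
  have "real R * (\<Sum>t\<le>K. h t) = (\<Sum>j\<le>m. real R * (h (2*j) + h (Suc (2*j))))"
    unfolding s1 s2 sum_distrib_left ..
  also have "\<dots> = (\<Sum>j\<le>m. (real N - 1 - real K) * (real (K choose (2*j)) * dj N R j))"
    by (rule sum.cong[OF refl]) (simp add: pair)
  finally show ?thesis unfolding h_def m_def sum_distrib_left .
qed

lemma ib: "ibinom (int a) (int b) = real (a choose b)"
  unfolding ibinom_def by simp

theorem theorem1:
  fixes n k r :: int
  assumes "0 \<le> k" and "k \<le> n - 2" and "1 \<le> r" and "r \<le> n"
  shows "real_of_int (k + 1) / real_of_int (n - k - 1) *
           (\<Sum>i\<in>{0..k}. ibinom k i * ibinom (n - k + i - 1) r * ibinom (n - i - 1) (n - r))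
       = real_of_int (k + 1) / real_of_int r *
           (\<Sum>j\<in>{j. 0 \<le> j \<and> 2 * j \<le> k}. (-1) ^ nat j *
              (ibinom k j * ibinom (k - j) j * ibinom (n - j - 2) (r - 1) * ibinom (n - j - 1) (r - j - 1))
              / ibinom (n - j - 2) j)"
proof -
  define K where "K = nat k"
  define N where "N = nat n"
  define R where "R = nat r"
  have kK: "k = int K" and nN: "n = int N" and rR: "r = int R" unfolding K_def N_def R_def using assms by auto
  have c1: "K + 2 \<le> N" "1 \<le> R" "R \<le> N" using assms unfolding kK nN rR by auto
  have L1: "{0..k} = int ` {..K}"
  proof
    show "{0..k} \<subseteq> int ` {..K}"
    proof
      fix x assume "x \<in> {0..k}"
      then have "x = int (nat x)" "nat x \<in> {..K}" unfolding kK by auto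
      then show "x \<in> int ` {..K}" by blast
    qed
  qed (auto simp: kK)
  have L2: "{j. 0 \<le> j \<and> 2 * j \<le> k} = int ` {..K div 2}"
  proof
    show "{j. 0 \<le> j \<and> 2 * j \<le> k} \<subseteq> int ` {..K div 2}"
    proof
      fix x assume "x \<in> {j. 0 \<le> j \<and> 2 * j \<le> k}"
      then have "x = int (nat x)" "nat x \<in> {..K div 2}" unfolding kK by auto
      then show "x \<in> int ` {..K div 2}" by blast
    qed
  qed (auto simp: kK)
  have lhs: "(\<Sum>i\<in>{0..k}. ibinom k i * ibinom (n - k + i - 1) r * ibinom (n - i - 1) (n - r))
     = (\<Sum>i\<le>K. real (K choose i) * real ((N-1-K+i) choose R) * real ((N-1-i) choose (N-R)))"
    unfolding L1 sum.reindex[OF inj_on_of_nat] comp_def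
  proof (rule sum.cong[OF refl])
    fix i assume "i \<in> {..K}"
    then have i: "i \<le> K" by simp
    have e: "int N - int K + int i - 1 = int (N-1-K+i)" "int N - int i - 1 = int (N-1-i)" "int N - int R = int (N-R)"
      using i c1 by auto
    show "(\<lambda>i. ibinom k i * ibinom (n - k + i - 1) r * ibinom (n - i - 1) (n - r)) (int i)
       = real (K choose i) * real ((N-1-K+i) choose R) * real ((N-1-i) choose (N-R))"
      by (simp only: nN kK rR e ib)
  qed
  have rhs: "(\<Sum>j\<in>{j. 0 \<le> j \<and> 2 * j \<le> k}. (-1) ^ nat j *
              (ibinom k j * ibinom (k - j) j * ibinom (n - j - 2) (r - 1) * ibinom (n - j - 1) (r - j - 1))
              / ibinom (n - j - 2) j)
     = (\<Sum>j\<le>K div 2. real (K choose (2*j)) * dj N R j)"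
    unfolding L2 sum.reindex[OF inj_on_of_nat] comp_def
  proof (rule sum.cong[OF refl])
    fix j assume "j \<in> {..K div 2}"
    then have j: "2*j \<le> K" by simp
    have e: "int K - int j = int (K-j)" "int N - int j - 2 = int (N-j-2)" "int R - 1 = int (R-1)" "int N - int j - 1 = int (N-j-1)"
      using j c1 by auto
    have x: "ibinom (int (N-j-1)) (int R - int j - 1) = (if j+1 \<le> R then real ((N-j-1) choose (R-j-1)) else 0)"
    proof (cases "j+1 \<le> R")
      case True
      have h: "int R - int j - 1 = int (R-j-1)" using True by auto
      show ?thesis unfolding h ib if_P[OF True] ..
    next
      case False
      then have "int R - int j - 1 < 0" by auto
      then show ?thesis using False unfolding ibinom_def by simp
    qed
    have cm: "real (K choose j) * real ((K-j) choose j) = real (K choose (2*j)) * real ((2*j) choose j)"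
    proof -
      have "(K choose (2*j)) * ((2*j) choose j) = (K choose j) * ((K-j) choose (2*j-j))"
        using choose_mult[of j "2*j" K] j by simp
      then show ?thesis by (metis of_nat_mult mult_2 add_diff_cancel_left')
    qed
    show "(\<lambda>j. (-1) ^ nat j *
              (ibinom k j * ibinom (k - j) j * ibinom (n - j - 2) (r - 1) * ibinom (n - j - 1) (r - j - 1))
              / ibinom (n - j - 2) j) (int j) = real (K choose (2*j)) * dj N R j"
    proof -
      have "(-1) ^ nat (int j) * (ibinom k (int j) * ibinom (k - int j) (int j) * ibinom (n - int j - 2) (r - 1) * ibinom (n - int j - 1) (r - int j - 1))
              / ibinom (n - int j - 2) (int j)
          = (-1)^j * ((real (K choose j) * real ((K-j) choose j)) * real ((N-j-2) choose (R-1)) * (if j+1 \<le> R then real ((N-j-1) choose (R-j-1)) else 0))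
              / real ((N-j-2) choose j)"
        by (simp only: nN kK rR x e ib nat_int)
      also have "\<dots> = real (K choose (2*j)) * dj N R j"
        unfolding cm dj_def by (simp add: mult_ac)
      finally show ?thesis by simp
    qed
  qed
  have cr: "real R * (\<Sum>t\<le>K. real (K choose t) * ct N R t)
       = (real N - 1 - real K) * (\<Sum>j\<le>K div 2. real (K choose (2*j)) * dj N R j)"
    by (rule core[OF c1])
  have ex: "(\<Sum>i\<le>K. real (K choose i) * real ((N-1-K+i) choose R) * real ((N-1-i) choose (N-R)))
       = (\<Sum>t\<le>K. real (K choose t) * ct N R t)"
    by (rule expand[OF c1])
  define S where "S = (\<Sum>t\<le>K. real (K choose t) * ct N R t)"
  define T where "T = (\<Sum>j\<le>K div 2. real (K choose (2*j)) * dj N R j)"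
  have Rp: "real R > 0" using c1 by simp
  have Np: "real N - real K - 1 > 0" using c1 by simp
  have ST: "S = (real N - real K - 1) / real R * T" using cr Rp unfolding S_def T_def by (simp add: field_simps)
  have i1: "real_of_int (k+1) = real K + 1" "real_of_int (n-k-1) = real N - real K - 1" "real_of_int r = real R"
    unfolding kK nN rR by simp_all
  have fin: "(real K + 1) / (real N - real K - 1) * ((real N - real K - 1) / real R * T) = (real K + 1) / real R * T"
  proof -
    have d: "(real N - real K - 1) / (real N - real K - 1) = 1" using Np by simp
    have "(real K + 1) / (real N - real K - 1) * ((real N - real K - 1) / real R * T)
        = ((real N - real K - 1) / (real N - real K - 1)) * ((real K + 1) / real R * T)"
      by (simp add: divide_inverse mult_ac)
    then show ?thesis unfolding d by simp
  qed
  show ?thesis unfolding lhs rhs ex i1 S_def[symmetric] T_def[symmetric] ST fin ..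
qed

end
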